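(* Let $N\ge 1$, let $\lambda_0,\dots,\lambda_N>0$ be positive real numbers and let $\gamma_0,\dots,\gamma_N\in\mathbb{C}$ be distinct complex numbers. Let $S\subset \mathbb{P}^1\times\mathbb{P}^1$ be the curve of bidegree $(N,N)$ defined in affine coordinates $(\eta,\zeta)$ by $$p(\eta,\zeta)=\sum_{i=0}^N \lambda_i^2\prod_{\substack{j=0\\ j\neq i}}^N(\zeta-\gamma_j)(1+\eta\bar\gamma_j)=0 .$$ Let $s$ be the global meromorphic section of the line bundle $\mathcal{O}(N+1,-N-1)$ on $\mathbb{P}^1\times\mathbb{P}^1$ given in affine coordinates by $$s(\eta,\zeta)=\frac{\prod_{i=0}^N(\zeta-\gamma_i)}{\prod_{i=0}^N(1+\eta\bar\gamma_i)} .$$ Then the restriction of $s$ to $S$ is non-vanishing, i.e. it is a holomorphic section of $\mathcal{O}(N+1,-N-1)|_S$ with no zeros (and no poles) on $S$.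
   Context: $\mathbb{P}^1\times\mathbb{P}^1$ has affine coordinates $(\eta,\zeta)$; $\mathcal{O}(a,b)$ denotes the line bundle $\pi_1^*\mathcal{O}(a)\otimes\pi_2^*\mathcal{O}(b)$, where $\pi_1$ is projection to the $\eta$-factor and $\pi_2$ to the $\zeta$-factor. The data $(\lambda_i,\gamma_i)$ are called JNR data and $S$ is the JNR spectral curve. *)

theory Defs
  imports "HOL-Analysis.Analysis"
begin

text \<open>Homogeneous coordinates on P^1 x P^1: a point is represented by a pair
  (a, b) of nonzero vectors a = (a0, a1), b = (b0, b1) in C^2, with affine
  coordinates eta = a1/a0 and zeta = b1/b0.  All polynomials below are the
  bihomogenisations of the affine expressions of the paper, so they make sense
  at the points at infinity as well.\<close>

definition JNR_p :: "nat \<Rightarrow> (nat \<Rightarrow> real) \<Rightarrow> (nat \<Rightarrow> complex)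
    \<Rightarrow> complex \<times> complex \<Rightarrow> complex \<times> complex \<Rightarrow> complex" where
  "JNR_p N lam gam a b =
     (\<Sum>i\<in>{0..N}. complex_of_real ((lam i)\<^sup>2) *
        (\<Prod>j\<in>{0..N} - {i}. (snd b - gam j * fst b) * (fst a + snd a * cnj (gam j))))"

text \<open>The affine cone over S inside (C^2 - 0) x (C^2 - 0).\<close>
definition JNR_cone :: "nat \<Rightarrow> (nat \<Rightarrow> real) \<Rightarrow> (nat \<Rightarrow> complex)
    \<Rightarrow> ((complex \<times> complex) \<times> (complex \<times> complex)) set" where
  "JNR_cone N lam gam = {(a, b). a \<noteq> 0 \<and> b \<noteq> 0 \<and> JNR_p N lam gam a b = 0}"

text \<open>The quotient
  is bihomogeneous of bidegree (-(N+1), N+1) and represents the meromorphic section s.\<close>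
definition JNR_s_num :: "nat \<Rightarrow> (nat \<Rightarrow> complex) \<Rightarrow> complex \<times> complex \<Rightarrow> complex" where
  "JNR_s_num N gam b = (\<Prod>i\<in>{0..N}. snd b - gam i * fst b)"

definition JNR_s_den :: "nat \<Rightarrow> (nat \<Rightarrow> complex) \<Rightarrow> complex \<times> complex \<Rightarrow> complex" where
  "JNR_s_den N gam a = (\<Prod>i\<in>{0..N}. fst a + snd a * cnj (gam i))"

definition JNR_s :: "nat \<Rightarrow> (nat \<Rightarrow> complex)
    \<Rightarrow> (complex \<times> complex) \<times> (complex \<times> complex) \<Rightarrow> complex" where
  "JNR_s N gam x = JNR_s_num N gam (snd x) / JNR_s_den N gam (fst x)"

end

theory Submission
  imports Defs
begin

lemma decomp:
  fixes c Z W :: "nat \<Rightarrow> complex"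
  assumes fin: "finite I" and k: "k \<in> I" and l: "l \<in> I" and kl: "k \<noteq> l"
  shows "(\<Sum>i\<in>I. c i * (\<Prod>j\<in>I-{i}. Z j * W j)) =
    c k * W l * ((\<Prod>j\<in>I-{k}. Z j) * (\<Prod>j\<in>I-{k,l}. W j)) +
    Z k * (c l * ((\<Prod>j\<in>I-{l,k}. Z j) * (\<Prod>j\<in>I-{l}. W j)) +
      W l * (\<Sum>i\<in>I-{k,l}. c i * ((\<Prod>j\<in>I-{i,k}. Z j) * (\<Prod>j\<in>I-{i,l}. W j))))"
proof -
  have s1: "(\<Sum>i\<in>I. c i * (\<Prod>j\<in>I-{i}. Z j * W j)) =
     c k * (\<Prod>j\<in>I-{k}. Z j * W j) + c l * (\<Prod>j\<in>I-{l}. Z j * W j)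
     + (\<Sum>i\<in>I-{k,l}. c i * (\<Prod>j\<in>I-{i}. Z j * W j))"
  proof -
    have "(\<Sum>i\<in>I. c i * (\<Prod>j\<in>I-{i}. Z j * W j)) = c k * (\<Prod>j\<in>I-{k}. Z j * W j) +
       (\<Sum>i\<in>I-{k}. c i * (\<Prod>j\<in>I-{i}. Z j * W j))"
      using fin k by (simp add: sum.remove)
    also have "(\<Sum>i\<in>I-{k}. c i * (\<Prod>j\<in>I-{i}. Z j * W j)) = c l * (\<Prod>j\<in>I-{l}. Z j * W j) +
       (\<Sum>i\<in>I-{k}-{l}. c i * (\<Prod>j\<in>I-{i}. Z j * W j))"
      using fin l kl by (subst sum.remove[of _ l]) auto
    moreover have "I-{k}-{l} = I-{k,l}" by auto
    ultimately show ?thesis by (simp add: add.assoc)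
  qed
  have p1: "(\<Prod>j\<in>I-{k}. Z j * W j) = W l * ((\<Prod>j\<in>I-{k}. Z j) * (\<Prod>j\<in>I-{k,l}. W j))"
  proof -
    have "(\<Prod>j\<in>I-{k}. W j) = W l * (\<Prod>j\<in>I-{k}-{l}. W j)"
      using fin l kl by (subst prod.remove[of _ l]) auto
    moreover have "I-{k}-{l} = I-{k,l}" by auto
    ultimately show ?thesis by (simp add: prod.distrib)
  qed
  have p2: "(\<Prod>j\<in>I-{l}. Z j * W j) = Z k * ((\<Prod>j\<in>I-{l,k}. Z j) * (\<Prod>j\<in>I-{l}. W j))"
  proof -
    have "(\<Prod>j\<in>I-{l}. Z j) = Z k * (\<Prod>j\<in>I-{l}-{k}. Z j)"
      using fin k kl by (subst prod.remove[of _ k]) auto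
    moreover have "I-{l}-{k} = I-{l,k}" by auto
    ultimately show ?thesis by (simp add: prod.distrib)
  qed
  have p3: "(\<Prod>j\<in>I-{i}. Z j * W j) = Z k * W l * ((\<Prod>j\<in>I-{i,k}. Z j) * (\<Prod>j\<in>I-{i,l}. W j))"
    if i: "i \<in> I-{k,l}" for i
  proof -
    have "(\<Prod>j\<in>I-{i}. Z j) = Z k * (\<Prod>j\<in>I-{i}-{k}. Z j)"
      using fin k i by (subst prod.remove[of _ k]) auto
    moreover have "(\<Prod>j\<in>I-{i}. W j) = W l * (\<Prod>j\<in>I-{i}-{l}. W j)"
      using fin l i by (subst prod.remove[of _ l]) auto
    moreover have "I-{i}-{k} = I-{i,k}" "I-{i}-{l} = I-{i,l}" by auto
    ultimately show ?thesis by (simp add: prod.distrib)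
  qed
  have s3: "(\<Sum>i\<in>I-{k,l}. c i * (\<Prod>j\<in>I-{i}. Z j * W j)) =
     Z k * W l * (\<Sum>i\<in>I-{k,l}. c i * ((\<Prod>j\<in>I-{i,k}. Z j) * (\<Prod>j\<in>I-{i,l}. W j)))"
    unfolding sum_distrib_left by (rule sum.cong) (simp_all add: p3)
  show ?thesis unfolding s1 p1 p2 s3 by (simp add: algebra_simps)
qed


definition Zf :: "(nat \<Rightarrow> complex) \<Rightarrow> nat \<Rightarrow> complex \<times> complex \<Rightarrow> complex" where
  "Zf gam j b = snd b - gam j * fst b"

definition Wf :: "(nat \<Rightarrow> complex) \<Rightarrow> nat \<Rightarrow> complex \<times> complex \<Rightarrow> complex" where
  "Wf gam j a = fst a + snd a * cnj (gam j)"

lemma p_eq: "JNR_p N lam gam a b =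
  (\<Sum>i\<in>{0..N}. complex_of_real ((lam i)\<^sup>2) * (\<Prod>j\<in>{0..N}-{i}. Zf gam j b * Wf gam j a))"
  by (simp add: JNR_p_def Zf_def Wf_def)

lemma Z_uniq:
  assumes "b \<noteq> 0" "inj_on gam I" "k \<in> I" "l \<in> I" "Zf gam k b = 0" "Zf gam l b = 0"
  shows "k = l"
proof (rule ccontr)
  assume kl: "k \<noteq> l"
  obtain b0 b1 where b: "b = (b0, b1)" by (cases b)
  have ne: "gam k \<noteq> gam l" using assms(2-4) kl by (meson inj_on_eq_iff)
  have e1: "b1 = gam k * b0" "b1 = gam l * b0" using assms(5,6) b by (auto simp: Zf_def)
  have "(gam k - gam l) * b0 = gam k * b0 - gam l * b0" by (simp add: algebra_simps)
  also have "\<dots> = 0" using e1 by (metis diff_self)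
  finally have "(gam k - gam l) * b0 = 0" .
  hence "b0 = 0" using ne by (metis eq_iff_diff_eq_0 mult_eq_0_iff)
  hence "b1 = 0" using e1 by simp
  thus False using \<open>b0 = 0\<close> b assms(1) by (simp add: zero_prod_def)
qed

lemma W_uniq:
  assumes "a \<noteq> 0" "inj_on gam I" "k \<in> I" "l \<in> I" "Wf gam k a = 0" "Wf gam l a = 0"
  shows "k = l"
proof (rule ccontr)
  assume kl: "k \<noteq> l"
  obtain a0 a1 where a: "a = (a0, a1)" by (cases a)
  have ne: "cnj (gam k) \<noteq> cnj (gam l)" using assms(2-4) kl by (meson inj_on_eq_iff complex_cnj_cancel_iff)
  have e1: "a0 + a1 * cnj (gam k) = 0" "a0 + a1 * cnj (gam l) = 0" using assms(5,6) a by (auto simp: Wf_def)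
  have "a1 * (cnj (gam k) - cnj (gam l)) = (a0 + a1 * cnj (gam k)) - (a0 + a1 * cnj (gam l))" by (simp add: algebra_simps)
  also have "\<dots> = 0" using e1 by simp
  finally have "a1 * (cnj (gam k) - cnj (gam l)) = 0" .
  hence "a1 = 0" using ne by (metis eq_iff_diff_eq_0 mult_eq_0_iff)
  hence "a0 = 0" using e1 by simp
  thus False using \<open>a1 = 0\<close> a assms(1) by (simp add: zero_prod_def)
qed

lemma one_term:
  fixes c F :: "nat \<Rightarrow> complex"
  assumes "finite I" "k \<in> I" "F k = 0"
  shows "(\<Sum>i\<in>I. c i * (\<Prod>j\<in>I-{i}. F j)) = c k * (\<Prod>j\<in>I-{k}. F j)"
proof -
  have "(\<Sum>i\<in>I-{k}. c i * (\<Prod>j\<in>I-{i}. F j)) = 0"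
  proof (rule sum.neutral, rule ballI)
    fix i assume "i \<in> I - {k}"
    hence "k \<in> I - {i}" using assms by auto
    hence "(\<Prod>j\<in>I-{i}. F j) = 0" using assms by (meson finite_Diff prod_zero_iff)
    thus "c i * (\<Prod>j\<in>I-{i}. F j) = 0" by simp
  qed
  thus ?thesis using assms by (simp add: sum.remove)
qed

lemma sing:
  fixes N :: nat and lam :: "nat \<Rightarrow> real" and gam :: "nat \<Rightarrow> complex"
  assumes lam: "\<forall>i\<in>{0..N}. lam i > 0"
    and inj: "inj_on gam {0..N}"
    and xS: "x \<in> JNR_cone N lam gam"
    and k: "k \<in> {0..N}" and l: "l \<in> {0..N}" and kl: "k \<noteq> l"
    and Zk: "Zf gam k (snd x) = 0" and Wl: "Wf gam l (fst x) = 0"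
  shows "\<exists>c. c \<noteq> 0 \<and> (JNR_s N gam \<longlongrightarrow> c)
             (at x within {y \<in> JNR_cone N lam gam. JNR_s_den N gam (fst y) \<noteq> 0})"
proof -
  define I where "I = {0..N}"
  define T where "T = {y \<in> JNR_cone N lam gam. JNR_s_den N gam (fst y) \<noteq> 0}"
  define c where "c = (\<lambda>i. complex_of_real ((lam i)\<^sup>2))"
  define Zy where "Zy = (\<lambda>j (y::(complex\<times>complex)\<times>(complex\<times>complex)). Zf gam j (snd y))"
  define Wy where "Wy = (\<lambda>j (y::(complex\<times>complex)\<times>(complex\<times>complex)). Wf gam j (fst y))"
  define A where "A = (\<lambda>y. (\<Prod>j\<in>I-{k}. Zy j y) * (\<Prod>j\<in>I-{k,l}. Wy j y))"
  define D where "D = (\<lambda>y. c l * ((\<Prod>j\<in>I-{l,k}. Zy j y) * (\<Prod>j\<in>I-{l}. Wy j y)) +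
      Wy l y * (\<Sum>i\<in>I-{k,l}. c i * ((\<Prod>j\<in>I-{i,k}. Zy j y) * (\<Prod>j\<in>I-{i,l}. Wy j y))))"
  define g where "g = (\<lambda>y. - c k * A y * (\<Prod>j\<in>I-{k}. Zy j y) / (D y * (\<Prod>j\<in>I-{l}. Wy j y)))"
  have fin: "finite I" by (simp add: I_def)
  have kI: "k \<in> I" and lI: "l \<in> I" using k l by (auto simp: I_def)
  have x0: "fst x \<noteq> 0" "snd x \<noteq> 0" using xS by (auto simp: JNR_cone_def)
  have Zx: "Zy j x \<noteq> 0" if "j \<in> I" "j \<noteq> k" for j
    using Z_uniq[OF x0(2) inj _ k _ Zk] that by (auto simp: Zy_def I_def)
  have Wx: "Wy j x \<noteq> 0" if "j \<in> I" "j \<noteq> l" for j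
    using W_uniq[OF x0(1) inj _ l _ Wl] that by (auto simp: Wy_def I_def)
  have cne: "c i \<noteq> 0" if "i \<in> I" for i
  proof -
    have "lam i > 0" using lam that by (simp add: I_def)
    thus ?thesis by (simp add: c_def)
  qed
  have P1: "(\<Prod>j\<in>I-{k}. Zy j x) \<noteq> 0" using Zx fin by (simp add: prod_zero_iff)
  have P2: "(\<Prod>j\<in>I-{l}. Wy j x) \<noteq> 0" using Wx fin by (simp add: prod_zero_iff)
  have P3: "(\<Prod>j\<in>I-{k,l}. Wy j x) \<noteq> 0" using Wx fin by (simp add: prod_zero_iff)
  have P4: "(\<Prod>j\<in>I-{l,k}. Zy j x) \<noteq> 0" using Zx fin by (simp add: prod_zero_iff)
  have Wlx: "Wy l x = 0" using Wl by (simp add: Wy_def)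
  have Dx: "D x \<noteq> 0" using P2 P4 cne[OF lI] by (simp add: D_def Wlx)
  have Ax: "A x \<noteq> 0" using P1 P3 by (simp add: A_def)
  have gx: "g x \<noteq> 0" using Dx Ax P1 P2 cne[OF kI] by (simp add: g_def)
  have contD: "isCont D x"
    unfolding D_def Zy_def Wy_def Zf_def Wf_def by (intro continuous_intros)
  have contg: "isCont g x"
    unfolding g_def using Dx P2 contD
    unfolding A_def Zy_def Wy_def Zf_def Wf_def by (intro continuous_intros) auto
  have limg: "(g \<longlongrightarrow> g x) (at x within T)"
    using contg continuous_at_imp_continuous_at_within continuous_within by blast
  have limD: "(D \<longlongrightarrow> D x) (at x within T)"
    using contD continuous_at_imp_continuous_at_within continuous_within by blast
  have evD: "eventually (\<lambda>y. D y \<noteq> 0) (at x within T)"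
    using tendsto_imp_eventually_ne[OF limD Dx] .
  have evT: "eventually (\<lambda>y. y \<in> T) (at x within T)"
    by (simp add: eventually_at_filter)
  have key: "JNR_s N gam y = g y" if yT: "y \<in> T" and Dy: "D y \<noteq> 0" for y
  proof -
    have p0: "JNR_p N lam gam (fst y) (snd y) = 0" and den: "JNR_s_den N gam (fst y) \<noteq> 0"
      using yT by (auto simp: T_def JNR_cone_def)
    have "JNR_p N lam gam (fst y) (snd y) = (\<Sum>i\<in>I. c i * (\<Prod>j\<in>I-{i}. Zy j y * Wy j y))"
      by (simp add: p_eq c_def Zy_def Wy_def I_def)
    also have "\<dots> = c k * Wy l y * A y + Zy k y * D y"
      unfolding A_def D_def by (rule decomp[OF fin kI lI kl])
    finally have "JNR_p N lam gam (fst y) (snd y) = c k * Wy l y * A y + Zy k y * D y" .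
    hence eq: "Zy k y = - (c k * Wy l y * A y) / D y" using p0 Dy
      by (simp add: field_simps add_eq_0_iff)
    have num: "JNR_s_num N gam (snd y) = Zy k y * (\<Prod>j\<in>I-{k}. Zy j y)"
      unfolding JNR_s_num_def Zy_def Zf_def I_def
      using prod.remove[of "{0..N}" k "\<lambda>i. snd (snd y) - gam i * fst (snd y)"] k by simp
    have den2: "JNR_s_den N gam (fst y) = Wy l y * (\<Prod>j\<in>I-{l}. Wy j y)"
      unfolding JNR_s_den_def Wy_def Wf_def I_def
      using prod.remove[of "{0..N}" l "\<lambda>i. fst (fst y) + snd (fst y) * cnj (gam i)"] l by simp
    have Wly: "Wy l y \<noteq> 0" and R2: "(\<Prod>j\<in>I-{l}. Wy j y) \<noteq> 0" using den den2 by auto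
    show ?thesis unfolding JNR_s_def num den2 eq g_def using Wly R2 Dy
      by (simp add: field_simps)
  qed
  have ev: "eventually (\<lambda>y. g y = JNR_s N gam y) (at x within T)"
    using evD evT by eventually_elim (simp add: key)
  have "(JNR_s N gam \<longlongrightarrow> g x) (at x within T)"
    using Lim_transform_eventually[OF limg ev] .
  thus ?thesis using gx unfolding T_def by blast
qed


theorem mainTheorem1:
  fixes N :: nat and lam :: "nat \<Rightarrow> real" and gam :: "nat \<Rightarrow> complex"
  assumes "N \<ge> 1"
    and "\<forall>i\<in>{0..N}. lam i > 0"
    and "inj_on gam {0..N}"
  shows "\<forall>x\<in>JNR_cone N lam gam. \<exists>c. c \<noteq> 0 \<and>
           (JNR_s N gam \<longlongrightarrow> c)
             (at x within {y \<in> JNR_cone N lam gam. JNR_s_den N gam (fst y) \<noteq> 0})"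
proof
  fix x assume xS: "x \<in> JNR_cone N lam gam"
  define I where "I = {0..N}"
  define c where "c = (\<lambda>i. complex_of_real ((lam i)\<^sup>2))"
  have fin: "finite I" by (simp add: I_def)
  have x0: "fst x \<noteq> 0" "snd x \<noteq> 0" and px: "JNR_p N lam gam (fst x) (snd x) = 0"
    using xS by (auto simp: JNR_cone_def)
  have cne: "c i \<noteq> 0" if "i \<in> I" for i
  proof -
    have "lam i > 0" using assms(2) that by (simp add: I_def)
    thus ?thesis by (simp add: c_def)
  qed
  have pI: "JNR_p N lam gam (fst x) (snd x) =
     (\<Sum>i\<in>I. c i * (\<Prod>j\<in>I-{i}. Zf gam j (snd x) * Wf gam j (fst x)))"
    by (simp add: p_eq c_def I_def)
  have numI: "JNR_s_num N gam (snd x) = (\<Prod>j\<in>I. Zf gam j (snd x))"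
    by (simp add: JNR_s_num_def Zf_def I_def)
  have denI: "JNR_s_den N gam (fst x) = (\<Prod>j\<in>I. Wf gam j (fst x))"
    by (simp add: JNR_s_den_def Wf_def I_def)
  show "\<exists>c. c \<noteq> 0 \<and> (JNR_s N gam \<longlongrightarrow> c)
             (at x within {y \<in> JNR_cone N lam gam. JNR_s_den N gam (fst y) \<noteq> 0})"
  proof (cases "JNR_s_num N gam (snd x) = 0")
    case True
    then obtain k where kI: "k \<in> I" and Zk: "Zf gam k (snd x) = 0"
      using fin numI by (auto simp: prod_zero_iff)
    have "c k * (\<Prod>j\<in>I-{k}. Zf gam j (snd x) * Wf gam j (fst x)) = 0"
      using px pI one_term[OF fin kI, of "\<lambda>j. Zf gam j (snd x) * Wf gam j (fst x)" c] Zk by simp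
    hence "(\<Prod>j\<in>I-{k}. Zf gam j (snd x) * Wf gam j (fst x)) = 0" using cne[OF kI] by simp
    then obtain l where lI: "l \<in> I - {k}" and "Zf gam l (snd x) * Wf gam l (fst x) = 0"
      using fin by (auto simp: prod_zero_iff)
    moreover have "Zf gam l (snd x) \<noteq> 0"
      using Z_uniq[OF x0(2) assms(3), of k l] kI lI Zk by (auto simp: I_def)
    ultimately have Wl: "Wf gam l (fst x) = 0" by simp
    show ?thesis using sing[OF assms(2,3) xS _ _ _ Zk Wl] kI lI by (auto simp: I_def)
  next
    case numne: False
    show ?thesis
    proof (cases "JNR_s_den N gam (fst x) = 0")
      case True
      then obtain l where lI: "l \<in> I" and Wl: "Wf gam l (fst x) = 0"
        using fin denI by (auto simp: prod_zero_iff)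
      have "c l * (\<Prod>j\<in>I-{l}. Zf gam j (snd x) * Wf gam j (fst x)) = 0"
        using px pI one_term[OF fin lI, of "\<lambda>j. Zf gam j (snd x) * Wf gam j (fst x)" c] Wl by simp
      hence "(\<Prod>j\<in>I-{l}. Zf gam j (snd x) * Wf gam j (fst x)) = 0" using cne[OF lI] by simp
      then obtain j where jI: "j \<in> I - {l}" and "Zf gam j (snd x) * Wf gam j (fst x) = 0"
        using fin by (auto simp: prod_zero_iff)
      moreover have "Zf gam j (snd x) \<noteq> 0" using numne numI fin jI by (auto simp: prod_zero_iff)
      moreover have "Wf gam j (fst x) \<noteq> 0"
        using W_uniq[OF x0(1) assms(3), of l j] lI jI Wl by (auto simp: I_def)
      ultimately show ?thesis by simp
    next
      case False
      have cont: "isCont (JNR_s N gam) x"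
        unfolding JNR_s_def JNR_s_num_def JNR_s_den_def
        using False unfolding JNR_s_den_def by (intro continuous_intros) auto
      have "(JNR_s N gam \<longlongrightarrow> JNR_s N gam x)
             (at x within {y \<in> JNR_cone N lam gam. JNR_s_den N gam (fst y) \<noteq> 0})"
        using cont continuous_at_imp_continuous_at_within continuous_within by blast
      moreover have "JNR_s N gam x \<noteq> 0" using False numne by (simp add: JNR_s_def)
      ultimately show ?thesis by blast
    qed
  qed
qed

end
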